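(* Let $\Omega\subset\mathbb{R}^N$ ($N\in\{2,3\}$) be a bounded connected domain with piecewise smooth boundary and outward normal $\mathbf{n}$, $\nu>0$, $\lambda>0$. Let $(\mathbf{u},p)$ be a sufficiently smooth (up to the boundary) solution on $\overline\Omega\times[0,T]$ of the PPE system $\mathbf{u}_t + (\mathbf{u}\cdot\nabla)\mathbf{u} = \nu\Delta\mathbf{u}-\nabla p + \mathbf{f}$ in $\Omega\times(0,T]$; $\mathbf{n}\times\mathbf{u}=\mathbf{n}\times\mathbf{g}$ and $\nabla\cdot\mathbf{u}=0$ on $\partial\Omega\times[0,T]$; $\Delta p = \nabla\cdot(\mathbf{f}-(\mathbf{u}\cdot\nabla)\mathbf{u})$ in $\Omega$; $\partial p/\partial\mathbf{n} = \mathbf{n}\cdot(\mathbf{f}-\mathbf{g}_t-\nu\nabla\times\nabla\times\mathbf{u}-(\mathbf{u}\cdot\nabla)\mathbf{u})+\lambda\,\mathbf{n}\cdot(\mathbf{u}-\mathbf{g})$ on $\partial\Omega$, with initial data $\mathbf{u}(\cdot,0)=\mathbf{u}_0$ satisfying $\nabla\cdot\mathbf{u}_0=0$ in $\Omega$ and $\mathbf{u}_0=\mathbf{g}(\cdot,0)$ on $\partial\Omega$. Then $(\mathbf{u},p)$ solves the incompressible Navier–Stokes equations $\mathbf{u}_t + (\mathbf{u}\cdot\nabla)\mathbf{u} = \nu\Delta\mathbf{u}-\nabla p + \mathbf{f}$, $\nabla\cdot\mathbf{u}=0$ in $\Omega\times(0,T]$, $\mathbf{u}=\mathbf{g}$ on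 $\partial\Omega\times[0,T]$, $\mathbf{u}(\cdot,0)=\mathbf{u}_0$. *)

theory Defs
  imports "HOL-Analysis.Analysis"
begin

primrec Ck_on :: "nat \<Rightarrow> 'a::real_normed_vector set \<Rightarrow> ('a \<Rightarrow> 'b::real_normed_vector) \<Rightarrow> bool" where
  "Ck_on 0 S G = continuous_on S G"
| "Ck_on (Suc k) S G =
     ((\<forall>z\<in>S. G differentiable (at z)) \<and>
      (\<forall>v. Ck_on k S (\<lambda>z. frechet_derivative G (at z) v)))"

definition smooth_on :: "'a::real_normed_vector set \<Rightarrow> ('a \<Rightarrow> 'b::real_normed_vector) \<Rightarrow> bool" where
  "smooth_on S G \<longleftrightarrow> (\<forall>k. Ck_on k S G)"

definition pdx :: "'n \<Rightarrow> (real^'n \<Rightarrow> 'b::real_normed_vector) \<Rightarrow> real^'n \<Rightarrow> 'b" where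
  "pdx i F x = vector_derivative (\<lambda>h. F (x + h *\<^sub>R axis i 1)) (at 0)"

definition pdt :: "(real^'n \<Rightarrow> real \<Rightarrow> 'b::real_normed_vector) \<Rightarrow> real^'n \<Rightarrow> real \<Rightarrow> 'b" where
  "pdt F x t = vector_derivative (\<lambda>s. F x s) (at t)"

definition sgrad :: "(real^'n \<Rightarrow> real) \<Rightarrow> real^'n \<Rightarrow> real^'n" where
  "sgrad q x = (\<chi> i. pdx i q x)"

definition vdiv :: "(real^'n \<Rightarrow> real^'n) \<Rightarrow> real^'n \<Rightarrow> real" where
  "vdiv w x = (\<Sum>i\<in>UNIV. pdx i (\<lambda>y. w y $ i) x)"

definition slap :: "(real^'n \<Rightarrow> real) \<Rightarrow> real^'n \<Rightarrow> real" where
  "slap q x = (\<Sum>i\<in>UNIV. pdx i (\<lambda>y. pdx i q y) x)"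

definition vlap :: "(real^'n \<Rightarrow> real^'n) \<Rightarrow> real^'n \<Rightarrow> real^'n" where
  "vlap w x = (\<chi> k. slap (\<lambda>y. w y $ k) x)"

definition conv :: "(real^'n \<Rightarrow> real^'n) \<Rightarrow> real^'n \<Rightarrow> real^'n" where
  "conv w x = (\<chi> k. \<Sum>j\<in>UNIV. w x $ j * pdx j (\<lambda>y. w y $ k) x)"

text \<open>For N = 3 this is the unfolding of the cross-product formula; for N = 2 it is
  the unfolding of curl(curl w) with scalar curl w = d_1 w_2 - d_2 w_1.\<close>
definition curlcurl :: "(real^'n \<Rightarrow> real^'n) \<Rightarrow> real^'n \<Rightarrow> real^'n" where
  "curlcurl w x = (\<chi> i. \<Sum>j\<in>UNIV.
      pdx j (\<lambda>y. pdx i (\<lambda>z. w z $ j) y - pdx j (\<lambda>z. w z $ i) y) x)"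

text \<open>Components of the wedge/cross product n x w: (n_i w_j - n_j w_i)_{i,j}.
  For N = 3 these are (up to sign/order) the components of the cross product,
  for N = 2 the single scalar n_1 w_2 - n_2 w_1.\<close>
definition cross_eq :: "real^'n \<Rightarrow> real^'n \<Rightarrow> real^'n \<Rightarrow> bool" where
  "cross_eq n v w \<longleftrightarrow> (\<forall>i j. n $ i * v $ j - n $ j * v $ i = n $ i * w $ j - n $ j * w $ i)"

definition pw_smooth_boundary :: "(real^'n) set \<Rightarrow> (real^'n) set \<Rightarrow> (real^'n \<Rightarrow> real^'n) \<Rightarrow> bool" where
  "pw_smooth_boundary \<Omega> E nrm \<longleftrightarrow>
     closed E \<and> E \<subseteq> frontier \<Omega> \<and>
     frontier \<Omega> \<subseteq> closure (frontier \<Omega> - E) \<and>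
     (CARD('n) = 2 \<longrightarrow> finite E) \<and>
     (CARD('n) = 3 \<longrightarrow> (\<exists>\<Gamma>::(real \<Rightarrow> real^'n) set. finite \<Gamma> \<and>
          (\<forall>\<gamma>\<in>\<Gamma>. \<gamma> C1_differentiable_on {0..1}) \<and> E \<subseteq> (\<Union>\<gamma>\<in>\<Gamma>. \<gamma> ` {0..1}))) \<and>
     (\<forall>x\<in>frontier \<Omega> - E. \<exists>U \<rho>. open U \<and> x \<in> U \<and> smooth_on U \<rho> \<and>
          (\<forall>y\<in>U. sgrad \<rho> y \<noteq> 0) \<and>
          \<Omega> \<inter> U = {y\<in>U. \<rho> y < 0} \<and>
          nrm x = sgrad \<rho> x /\<^sub>R norm (sgrad \<rho> x))"

end

theory Submission
  imports Defs
begin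


definition Dd :: "('a::real_normed_vector \<Rightarrow> 'b::real_normed_vector) \<Rightarrow> 'a \<Rightarrow> 'a \<Rightarrow> 'b" where
  "Dd F a w = frechet_derivative F (at w) a"

lemma smooth_Ck: "smooth_on S F \<Longrightarrow> Ck_on k S F"
  unfolding smooth_on_def by blast

lemma smooth_diff: "smooth_on S F \<Longrightarrow> w \<in> S \<Longrightarrow> F differentiable (at w)"
  using smooth_Ck[of S F 1] by simp

lemma smooth_hasD: "smooth_on S F \<Longrightarrow> w \<in> S \<Longrightarrow> (F has_derivative (\<lambda>h. Dd F h w)) (at w)"
  unfolding Dd_def using smooth_diff frechet_derivative_works by (metis eta_contract_eq)

lemma smooth_Dd: "smooth_on S F \<Longrightarrow> smooth_on S (Dd F a)"
  unfolding smooth_on_def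
proof
  fix k assume "\<forall>k. Ck_on k S F"
  then have "Ck_on (Suc k) S F" by blast
  then show "Ck_on k S (Dd F a)" unfolding Dd_def by simp
qed

lemma smooth_cont: "smooth_on S F \<Longrightarrow> continuous_on S F"
  using smooth_Ck[of S F 0] by simp

lemma Dd_linear: "smooth_on S F \<Longrightarrow> w \<in> S \<Longrightarrow> bounded_linear (\<lambda>h. Dd F h w)"
  using smooth_hasD has_derivative_bounded_linear by blast

lemma Dd_cong:
  assumes "open S" "w \<in> S" "\<And>y. y \<in> S \<Longrightarrow> F y = G y" "(F has_derivative F') (at w)"
  shows "Dd G a w = F' a"
proof -
  have "(G has_derivative F') (at w)"
    using has_derivative_transform_within_open[OF assms(4) assms(1) assms(2)] assms(3) by blast
  then show ?thesis unfolding Dd_def using frechet_derivative_at by metis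
qed

lemma line_vd:
  fixes f :: "'a::real_normed_vector \<Rightarrow> 'b::real_normed_vector"
  assumes "(f has_derivative f') (at w)"
  shows "((\<lambda>h. f (w + h *\<^sub>R a)) has_vector_derivative f' a) (at 0)"
proof -
  have g: "((\<lambda>h::real. w + h *\<^sub>R a) has_derivative (\<lambda>h. h *\<^sub>R a)) (at 0)"
    by (auto intro!: derivative_eq_intros)
  have f0: "(f has_derivative f') (at (w + 0 *\<^sub>R a))" using assms by simp
  have "((\<lambda>h. f (w + h *\<^sub>R a)) has_derivative (\<lambda>h. f' (h *\<^sub>R a))) (at 0)"
    using diff_chain_at[OF g f0] by (simp add: o_def)
  moreover have "(\<lambda>h. f' (h *\<^sub>R a)) = (\<lambda>h. h *\<^sub>R f' a)"
    using assms has_derivative_bounded_linear linear_scale[of f'] bounded_linear.linear by blast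
  ultimately show ?thesis unfolding has_vector_derivative_def by simp
qed

lemma line_rd:
  fixes f :: "'a::real_normed_vector \<Rightarrow> real"
  assumes "(f has_derivative f') (at w)"
  shows "((\<lambda>h. f (w + h *\<^sub>R a)) has_real_derivative f' a) (at 0)"
  using line_vd[OF assms] has_real_derivative_iff_has_vector_derivative by blast

lemma line_rd_at:
  fixes f :: "'a::real_normed_vector \<Rightarrow> real"
  assumes "\<And>w. w \<in> S \<Longrightarrow> ((\<lambda>h. f (w + h *\<^sub>R a)) has_real_derivative fa w) (at 0)"
    and "w + x *\<^sub>R a \<in> S"
  shows "((\<lambda>h. f (w + h *\<^sub>R a)) has_real_derivative fa (w + x *\<^sub>R a)) (at x)"
proof -
  have "((\<lambda>h. f ((w + x *\<^sub>R a) + h *\<^sub>R a)) has_real_derivative fa (w + x *\<^sub>R a)) (at 0)"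
    using assms by blast
  then have "((\<lambda>h. f (w + (h + x) *\<^sub>R a)) has_real_derivative fa (w + x *\<^sub>R a)) (at 0)"
    by (simp add: algebra_simps scaleR_add_left)
  then show ?thesis using DERIV_shift[of "\<lambda>h. f (w + h *\<^sub>R a)" _ 0 x] by simp
qed



lemma route:
  fixes f fa fab :: "'a::real_normed_vector \<Rightarrow> real"
  assumes da: "\<And>w. w \<in> S \<Longrightarrow> ((\<lambda>h. f (w + h *\<^sub>R a)) has_real_derivative fa w) (at 0)"
    and dab: "\<And>w. w \<in> S \<Longrightarrow> ((\<lambda>h. fa (w + h *\<^sub>R b)) has_real_derivative fab w) (at 0)"
    and s: "0 < s"
    and inS: "\<And>x y. 0 \<le> x \<Longrightarrow> x \<le> s \<Longrightarrow> 0 \<le> y \<Longrightarrow> y \<le> s \<Longrightarrow> z + x *\<^sub>R a + y *\<^sub>R b \<in> S"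
  shows "\<exists>x y. 0 < x \<and> x < s \<and> 0 < y \<and> y < s \<and>
     f (z + s *\<^sub>R a + s *\<^sub>R b) - f (z + s *\<^sub>R a) - f (z + s *\<^sub>R b) + f z
       = s * s * fab (z + x *\<^sub>R a + y *\<^sub>R b)"
proof -
  define g where "g x = f ((z + s *\<^sub>R b) + x *\<^sub>R a) - f (z + x *\<^sub>R a)" for x
  have "DERIV g x :> fa ((z + s *\<^sub>R b) + x *\<^sub>R a) - fa (z + x *\<^sub>R a)" if "0 \<le> x" "x \<le> s" for x
  proof -
    have m1: "(z + s *\<^sub>R b) + x *\<^sub>R a \<in> S" using inS[of x s] that s by (simp add: algebra_simps)
    have m2: "z + x *\<^sub>R a \<in> S" using inS[of x 0] that s by simp
    show ?thesis unfolding g_def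
      by (intro DERIV_diff line_rd_at[where S=S and f=f, OF da] m1 m2)
  qed
  from MVT2[OF s this] obtain x where x: "0 < x" "x < s"
    "g s - g 0 = (s - 0) * (fa ((z + s *\<^sub>R b) + x *\<^sub>R a) - fa (z + x *\<^sub>R a))" by blast
  define k where "k y = fa ((z + x *\<^sub>R a) + y *\<^sub>R b)" for y
  have "DERIV k y :> fab ((z + x *\<^sub>R a) + y *\<^sub>R b)" if "0 \<le> y" "y \<le> s" for y
  proof -
    have m1: "(z + x *\<^sub>R a) + y *\<^sub>R b \<in> S" using inS[of x y] that x by simp
    show ?thesis unfolding k_def
      by (intro line_rd_at[where S=S and f=fa, OF dab] m1)
  qed
  from MVT2[OF s this] obtain y where y: "0 < y" "y < s"
    "k s - k 0 = (s - 0) * fab ((z + x *\<^sub>R a) + y *\<^sub>R b)" by blast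
  have "f (z + s *\<^sub>R a + s *\<^sub>R b) - f (z + s *\<^sub>R a) - f (z + s *\<^sub>R b) + f z = g s - g 0"
    unfolding g_def by (simp add: algebra_simps)
  also have "\<dots> = s * (k s - k 0)" using x(3) unfolding k_def by (simp add: algebra_simps)
  also have "\<dots> = s * s * fab (z + x *\<^sub>R a + y *\<^sub>R b)" using y(3) by simp
  finally show ?thesis using x y by blast
qed

lemma clairaut:
  fixes f fa fb fab fba :: "'a::real_normed_vector \<Rightarrow> real"
  assumes S: "open S" "z \<in> S"
    and da: "\<And>w. w \<in> S \<Longrightarrow> ((\<lambda>h. f (w + h *\<^sub>R a)) has_real_derivative fa w) (at 0)"
    and db: "\<And>w. w \<in> S \<Longrightarrow> ((\<lambda>h. f (w + h *\<^sub>R b)) has_real_derivative fb w) (at 0)"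
    and dab: "\<And>w. w \<in> S \<Longrightarrow> ((\<lambda>h. fa (w + h *\<^sub>R b)) has_real_derivative fab w) (at 0)"
    and dba: "\<And>w. w \<in> S \<Longrightarrow> ((\<lambda>h. fb (w + h *\<^sub>R a)) has_real_derivative fba w) (at 0)"
    and cab: "continuous_on S fab" and cba: "continuous_on S fba"
  shows "fab z = fba z"
proof (rule ccontr)
  assume ne: "fab z \<noteq> fba z"
  define e where "e = \<bar>fab z - fba z\<bar> / 2"
  have e: "e > 0" using ne unfolding e_def by simp
  obtain r where r: "r > 0" "ball z r \<subseteq> S" using S openE by blast
  obtain d1 where d1: "d1 > 0" "\<And>w. w \<in> S \<Longrightarrow> dist w z < d1 \<Longrightarrow> dist (fab w) (fab z) < e"
    using cab S(2) e unfolding continuous_on_iff by metis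
  obtain d2 where d2: "d2 > 0" "\<And>w. w \<in> S \<Longrightarrow> dist w z < d2 \<Longrightarrow> dist (fba w) (fba z) < e"
    using cba S(2) e unfolding continuous_on_iff by metis
  define m where "m = min r (min d1 d2)"
  have m: "m > 0" "m \<le> r" "m \<le> d1" "m \<le> d2" using r d1 d2 unfolding m_def by auto
  define s where "s = m / (2 * (norm a + norm b + 1))"
  have den: "2 * (norm a + norm b + 1) > 0" by (intro mult_pos_pos add_nonneg_pos add_nonneg_nonneg norm_ge_zero) auto
  have s: "s > 0" using m den unfolding s_def by simp
  have dist_small: "dist (z + x *\<^sub>R a + y *\<^sub>R b) z < m"
    if "0 \<le> x" "x \<le> s" "0 \<le> y" "y \<le> s" for x y
  proof -
    have "dist (z + x *\<^sub>R a + y *\<^sub>R b) z = norm (x *\<^sub>R a + y *\<^sub>R b)" by (simp add: dist_norm)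
    also have "\<dots> \<le> x * norm a + y * norm b" using that
      by (metis (no_types, lifting) abs_of_nonneg norm_scaleR norm_triangle_ineq)
    also have "\<dots> \<le> s * norm a + s * norm b" using that
      by (intro add_mono mult_right_mono) auto
    also have "\<dots> < s * (2 * (norm a + norm b + 1))"
    proof -
      have "0 \<le> s * norm a" "0 \<le> s * norm b" using s by simp_all
      moreover have "s * (2 * (norm a + norm b + 1)) = 2 * (s * norm a) + 2 * (s * norm b) + 2 * s"
        by (simp add: algebra_simps)
      ultimately show ?thesis using s by linarith
    qed
    also have "\<dots> = m" unfolding s_def using den by simp
    finally show ?thesis .
  qed
  have inS: "z + x *\<^sub>R a + y *\<^sub>R b \<in> S" if "0 \<le> x" "x \<le> s" "0 \<le> y" "y \<le> s" for x y
    using dist_small[OF that] m r by (auto simp: dist_commute)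
  have inS': "z + x *\<^sub>R b + y *\<^sub>R a \<in> S" if "0 \<le> x" "x \<le> s" "0 \<le> y" "y \<le> s" for x y
    using inS[of y x] that by (simp add: algebra_simps)
  obtain x1 y1 where p1: "0 < x1" "x1 < s" "0 < y1" "y1 < s"
     "f (z + s *\<^sub>R a + s *\<^sub>R b) - f (z + s *\<^sub>R a) - f (z + s *\<^sub>R b) + f z
       = s * s * fab (z + x1 *\<^sub>R a + y1 *\<^sub>R b)"
    using route[where S=S and f=f and fa=fa and fab=fab, OF da dab s inS] by blast
  obtain x2 y2 where p2: "0 < x2" "x2 < s" "0 < y2" "y2 < s"
     "f (z + s *\<^sub>R b + s *\<^sub>R a) - f (z + s *\<^sub>R b) - f (z + s *\<^sub>R a) + f z
       = s * s * fba (z + x2 *\<^sub>R b + y2 *\<^sub>R a)"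
    using route[where S=S and f=f and fa=fb and fab=fba, OF db dba s inS'] by blast
  have cm: "z + s *\<^sub>R b + s *\<^sub>R a = z + s *\<^sub>R a + s *\<^sub>R b" by (simp add: algebra_simps)
  have "s * s * fab (z + x1 *\<^sub>R a + y1 *\<^sub>R b) = s * s * fba (z + x2 *\<^sub>R b + y2 *\<^sub>R a)"
    using p1(5) p2(5) unfolding cm by linarith
  then have eq: "fab (z + x1 *\<^sub>R a + y1 *\<^sub>R b) = fba (z + x2 *\<^sub>R b + y2 *\<^sub>R a)"
    using s by simp
  have q1: "dist (fab (z + x1 *\<^sub>R a + y1 *\<^sub>R b)) (fab z) < e"
    using d1(2)[OF inS] dist_small[of x1 y1] p1 m by auto
  have "dist (z + x2 *\<^sub>R b + y2 *\<^sub>R a) z < m"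
    using dist_small[of y2 x2] p2 by (simp add: algebra_simps)
  then have q2: "dist (fba (z + x2 *\<^sub>R b + y2 *\<^sub>R a)) (fba z) < e"
    using d2(2)[OF inS'] p2 m by auto
  have "\<bar>fab z - fba z\<bar> < 2 * e" using q1 q2 eq unfolding dist_real_def by linarith
  then show False unfolding e_def by simp
qed



lemma comp_hasD: "smooth_on S F \<Longrightarrow> w \<in> S \<Longrightarrow>
   ((\<lambda>x. F x $ k) has_derivative (\<lambda>h. Dd F h w $ k)) (at w)"
  using bounded_linear.has_derivative[OF bounded_linear_vec_nth smooth_hasD] by blast

lemma Dd_sym:
  fixes F :: "'a::real_normed_vector \<Rightarrow> real^'m"
  assumes "open S" "smooth_on S F" "z \<in> S"
  shows "Dd (Dd F a) b z = Dd (Dd F b) a z"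
proof (subst vec_eq_iff, rule allI)
  fix k
  have sa: "smooth_on S (Dd F a)" and sb: "smooth_on S (Dd F b)"
    using smooth_Dd assms(2) by blast+
  show "Dd (Dd F a) b z $ k = Dd (Dd F b) a z $ k"
  proof (rule clairaut[where S=S and f="\<lambda>w. F w $ k" and fa="\<lambda>w. Dd F a w $ k"
        and fb="\<lambda>w. Dd F b w $ k" and a=a and b=b])
    show "open S" "z \<in> S" using assms by auto
    show "((\<lambda>h. F (w + h *\<^sub>R a) $ k) has_real_derivative Dd F a w $ k) (at 0)" if "w \<in> S" for w
      using line_rd[OF comp_hasD[OF assms(2) that]] by simp
    show "((\<lambda>h. F (w + h *\<^sub>R b) $ k) has_real_derivative Dd F b w $ k) (at 0)" if "w \<in> S" for w
      using line_rd[OF comp_hasD[OF assms(2) that]] by simp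
    show "((\<lambda>h. Dd F a (w + h *\<^sub>R b) $ k) has_real_derivative Dd (Dd F a) b w $ k) (at 0)" if "w \<in> S" for w
      using line_rd[OF comp_hasD[OF sa that]] by simp
    show "((\<lambda>h. Dd F b (w + h *\<^sub>R a) $ k) has_real_derivative Dd (Dd F b) a w $ k) (at 0)" if "w \<in> S" for w
      using line_rd[OF comp_hasD[OF sb that]] by simp
    show "continuous_on S (\<lambda>w. Dd (Dd F a) b w $ k)"
      by (intro continuous_on_component smooth_cont smooth_Dd sa)
    show "continuous_on S (\<lambda>w. Dd (Dd F b) a w $ k)"
      by (intro continuous_on_component smooth_cont smooth_Dd sb)
  qed
qed



lemma pdx_hasD:
  assumes "(F has_derivative F') (at x)"
  shows "pdx i F x = F' (axis i 1)"
  unfolding pdx_def using line_vd[OF assms] vector_derivative_at by blast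

lemma pdx_eq_on:
  assumes "open T" "x \<in> T" "\<And>y. y \<in> T \<Longrightarrow> F y = G y" "(G has_derivative G') (at x)"
  shows "pdx i F x = G' (axis i 1)"
proof -
  have "(F has_derivative G') (at x)"
    using has_derivative_transform_within_open[OF assms(4) assms(1) assms(2)] assms(3) by metis
  then show ?thesis by (rule pdx_hasD)
qed

lemma open_slice: "open S \<Longrightarrow> open {y. (y, t) \<in> S}"
proof -
  assume "open S"
  moreover have "continuous_on UNIV (\<lambda>y. (y, t))" by (intro continuous_intros)
  ultimately have "open ((\<lambda>y. (y, t)) -` S)"
    using continuous_on_open_vimage[of UNIV "\<lambda>y. (y, t)"] by auto
  then show ?thesis by (simp add: vimage_def)
qed

lemma slice_hasD:
  fixes Fz :: "('a::real_normed_vector \<times> real) \<Rightarrow> 'b::real_normed_vector"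
  assumes "smooth_on S Fz" "(x, t) \<in> S"
  shows "((\<lambda>y. Fz (y, t)) has_derivative (\<lambda>h. Dd Fz (h, 0) (x, t))) (at x)"
proof -
  have g: "((\<lambda>y. (y, t)) has_derivative (\<lambda>h. (h, 0))) (at x)"
    by (auto intro!: derivative_eq_intros)
  show ?thesis using diff_chain_at[OF g, of Fz] smooth_hasD[OF assms] by (simp add: o_def)
qed

lemma slice_hasD_comp:
  fixes Fz :: "('a::real_normed_vector \<times> real) \<Rightarrow> real^'m"
  assumes "smooth_on S Fz" "(x, t) \<in> S"
  shows "((\<lambda>y. Fz (y, t) $ k) has_derivative (\<lambda>h. Dd Fz (h, 0) (x, t) $ k)) (at x)"
  using bounded_linear.has_derivative[OF bounded_linear_vec_nth slice_hasD[OF assms]] by blast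

lemma time_vd:
  fixes Fz :: "('a::real_normed_vector \<times> real) \<Rightarrow> 'b::real_normed_vector"
  assumes "smooth_on S Fz" "(x, t) \<in> S"
  shows "((\<lambda>s. Fz (x, s)) has_vector_derivative Dd Fz (0, 1) (x, t)) (at t)"
proof -
  have g: "((\<lambda>s. (x, s)) has_derivative (\<lambda>h. (0, h))) (at t)"
    by (auto intro!: derivative_eq_intros)
  have "((\<lambda>s. Fz (x, s)) has_derivative (\<lambda>h. Dd Fz (0, h) (x, t))) (at t)"
    using diff_chain_at[OF g, of Fz] smooth_hasD[OF assms] by (simp add: o_def)
  moreover have "(\<lambda>h. Dd Fz (0, h) (x, t)) = (\<lambda>h. h *\<^sub>R Dd Fz (0, 1) (x, t))"
  proof
    fix h :: real
    have "Dd Fz (0, h) (x, t) = Dd Fz (h *\<^sub>R (0, 1)) (x, t)" by simp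
    also have "\<dots> = h *\<^sub>R Dd Fz (0, 1) (x, t)"
      using Dd_linear[OF assms] linear_scale bounded_linear.linear by blast
    finally show "Dd Fz (0, h) (x, t) = h *\<^sub>R Dd Fz (0, 1) (x, t)" .
  qed
  ultimately show ?thesis unfolding has_vector_derivative_def by simp
qed

lemma pdt_eq:
  fixes Fz :: "('a::real_normed_vector \<times> real) \<Rightarrow> 'b::real_normed_vector"
  assumes "smooth_on S Fz" "(x, t) \<in> S"
  shows "vector_derivative (\<lambda>s. Fz (x, s)) (at t) = Dd Fz (0, 1) (x, t)"
  using time_vd[OF assms] vector_derivative_at by blast



lemma maxp_eps:
  fixes \<Omega> :: "(real^'n) set" and \<phi> \<phi>t :: "(real^'n) \<times> real \<Rightarrow> real"
    and dA dB :: "'n \<Rightarrow> (real^'n) \<times> real \<Rightarrow> real"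
  assumes om: "open \<Omega>" "bounded \<Omega>" and nu: "\<nu> \<ge> 0"
    and cont: "continuous_on (closure \<Omega> \<times> {0..T}) \<phi>"
    and bd: "\<And>x t. x \<in> frontier \<Omega> \<Longrightarrow> t \<in> {0..T} \<Longrightarrow> \<phi> (x, t) \<le> 0"
    and ini: "\<And>x. x \<in> \<Omega> \<Longrightarrow> \<phi> (x, 0) \<le> 0"
    and dt: "\<And>x t. x \<in> \<Omega> \<Longrightarrow> t \<in> {0<..T} \<Longrightarrow> ((\<lambda>s. \<phi> (x, s)) has_real_derivative \<phi>t (x, t)) (at t)"
    and dd1: "\<And>x t j. x \<in> \<Omega> \<Longrightarrow> t \<in> {0<..T} \<Longrightarrow>
       ((\<lambda>h. \<phi> (x + h *\<^sub>R axis j 1, t)) has_real_derivative dA j (x, t)) (at 0)"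
    and dd2: "\<And>x t j. x \<in> \<Omega> \<Longrightarrow> t \<in> {0<..T} \<Longrightarrow>
       ((\<lambda>h. dA j (x + h *\<^sub>R axis j 1, t)) has_real_derivative dB j (x, t)) (at 0)"
    and heat: "\<And>x t. x \<in> \<Omega> \<Longrightarrow> t \<in> {0<..T} \<Longrightarrow> \<phi>t (x, t) = \<nu> * (\<Sum>j\<in>UNIV. dB j (x, t))"
    and eps: "\<epsilon> > 0"
  shows "\<forall>z \<in> closure \<Omega> \<times> {0..T}. \<phi> z - \<epsilon> * snd z \<le> 0"
proof (rule ccontr)
  define K where "K = closure \<Omega> \<times> {0..T}"
  define \<psi> where "\<psi> z = \<phi> z - \<epsilon> * snd z" for z
  assume "\<not> (\<forall>z \<in> closure \<Omega> \<times> {0..T}. \<phi> z - \<epsilon> * snd z \<le> 0)"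
  then obtain z1 where z1: "z1 \<in> K" "\<psi> z1 > 0" unfolding K_def \<psi>_def by auto
  have "compact K" unfolding K_def using om(2) by (intro compact_Times compact_closure[THEN iffD2]) auto
  moreover have "K \<noteq> {}" using z1 by auto
  moreover have "continuous_on K \<psi>" unfolding \<psi>_def K_def using cont by (intro continuous_intros) auto
  ultimately obtain z0 where z0: "z0 \<in> K" "\<And>z. z \<in> K \<Longrightarrow> \<psi> z \<le> \<psi> z0"
    using continuous_attains_sup by metis
  obtain x0 t0 where zz: "z0 = (x0, t0)" by (cases z0)
  have pos: "\<psi> z0 > 0" using z0(2)[OF z1(1)] z1(2) by linarith
  have x0c: "x0 \<in> closure \<Omega>" and t0: "0 \<le> t0" "t0 \<le> T" using z0(1) zz K_def by auto
  have x0: "x0 \<in> \<Omega>"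
  proof (rule ccontr)
    assume "x0 \<notin> \<Omega>"
    then have "x0 \<in> frontier \<Omega>" using x0c om(1) by (simp add: frontier_def interior_open)
    then have "\<phi> (x0, t0) \<le> 0" using bd t0 by auto
    then show False using pos zz eps t0 unfolding \<psi>_def by (simp add: mult_nonneg_nonneg) (smt (verit) mult_nonneg_nonneg)
  qed
  have t0p: "t0 > 0"
  proof (rule ccontr)
    assume "\<not> t0 > 0" then have "t0 = 0" using t0 by auto
    then show False using ini[OF x0] pos zz unfolding \<psi>_def by simp
  qed
  have t0I: "t0 \<in> {0<..T}" using t0p t0 by auto
  have maxK: "\<psi> (x, t) \<le> \<psi> (x0, t0)" if "x \<in> closure \<Omega>" "0 \<le> t" "t \<le> T" for x t
    using z0(2)[of "(x, t)"] that zz unfolding K_def by auto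
  have tder: "\<phi>t (x0, t0) \<ge> \<epsilon>"
  proof (rule ccontr)
    assume "\<not> \<phi>t (x0, t0) \<ge> \<epsilon>"
    then have neg: "\<phi>t (x0, t0) - \<epsilon> < 0" by simp
    have "DERIV (\<lambda>s. \<psi> (x0, s)) t0 :> \<phi>t (x0, t0) - \<epsilon>"
      unfolding \<psi>_def using dt[OF x0 t0I] by (auto intro!: derivative_eq_intros)
    from DERIV_neg_dec_left[OF this neg] obtain d where d: "d > 0"
      "\<And>h. h > 0 \<Longrightarrow> h < d \<Longrightarrow> \<psi> (x0, t0) < \<psi> (x0, t0 - h)" by auto
    define h where "h = min (d / 2) (t0 / 2)"
    have "h > 0" "h < d" "0 \<le> t0 - h" "t0 - h \<le> T" using d t0p t0 unfolding h_def by auto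
    then show False using d(2)[of h] maxK[OF x0c, of "t0 - h"] by auto
  qed
  obtain r where r: "r > 0" "ball x0 r \<subseteq> \<Omega>" using om(1) x0 openE by blast
  have inb: "x0 + h *\<^sub>R axis j 1 \<in> \<Omega>" if "\<bar>h\<bar> < r" for h j
  proof -
    have "dist x0 (x0 + h *\<^sub>R axis j 1) = \<bar>h\<bar>" by (simp add: dist_norm)
    then show ?thesis using r that by auto
  qed
  have sder: "dB j (x0, t0) \<le> 0" for j
  proof (rule ccontr)
    assume "\<not> dB j (x0, t0) \<le> 0"
    then have d2p: "dB j (x0, t0) > 0" by simp
    define g where "g h = \<phi> (x0 + h *\<^sub>R axis j 1, t0)" for h
    have gle: "g h \<le> g 0" if "\<bar>h\<bar> < r" for h
    proof -
      have "x0 + h *\<^sub>R axis j 1 \<in> closure \<Omega>" using inb[OF that] closure_subset by blast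
      then show ?thesis using maxK[of "x0 + h *\<^sub>R axis j 1" t0] t0 unfolding g_def \<psi>_def by auto
    qed
    have "dA j (x0, t0) = 0"
    proof (rule DERIV_local_max)
      show "DERIV g 0 :> dA j (x0, t0)" unfolding g_def using dd1[OF x0 t0I, of j] by simp
      show "0 < r" using r by simp
      show "\<forall>y. \<bar>0 - y\<bar> < r \<longrightarrow> g y \<le> g 0" using gle by auto
    qed
    have gd: "DERIV g x :> dA j (x0 + x *\<^sub>R axis j 1, t0)" if "\<bar>x\<bar> < r" for x
      unfolding g_def
      using line_rd_at[where S=\<Omega> and f="\<lambda>y. \<phi> (y, t0)" and fa="\<lambda>y. dA j (y, t0)" and w=x0
          and a="axis j 1" and x=x] dd1[OF _ t0I] inb[OF that] by blast
    have "DERIV (\<lambda>h. dA j (x0 + h *\<^sub>R axis j 1, t0)) 0 :> dB j (x0, t0)" using dd2[OF x0 t0I] by simp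
    from DERIV_pos_inc_right[OF this d2p] obtain d where d: "d > 0"
      "\<And>h. h > 0 \<Longrightarrow> h < d \<Longrightarrow> dA j (x0 + 0 *\<^sub>R axis j 1, t0) < dA j (x0 + (0 + h) *\<^sub>R axis j 1, t0)"
      by blast
    define h1 where "h1 = min d r / 2"
    have h1: "h1 > 0" "h1 < d" "h1 < r" using d r unfolding h1_def by auto
    have "\<exists>\<xi>. 0 < \<xi> \<and> \<xi> < h1 \<and> g h1 - g 0 = (h1 - 0) * dA j (x0 + \<xi> *\<^sub>R axis j 1, t0)"
      by (rule MVT2[OF h1(1)]) (use gd h1 in auto)
    then obtain \<xi> where xi: "0 < \<xi>" "\<xi> < h1" "g h1 - g 0 = h1 * dA j (x0 + \<xi> *\<^sub>R axis j 1, t0)" by auto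
    have "dA j (x0 + \<xi> *\<^sub>R axis j 1, t0) > 0" using d(2)[of \<xi>] xi h1 \<open>dA j (x0, t0) = 0\<close> by simp
    then have "g h1 - g 0 > 0" using xi h1 by simp
    then show False using gle[of h1] h1 by simp
  qed
  have "(\<Sum>j\<in>UNIV. dB j (x0, t0)) \<le> 0" using sder by (simp add: sum_nonpos)
  then have "\<phi>t (x0, t0) \<le> 0" using heat[OF x0 t0I] nu by (simp add: mult_nonneg_nonpos)
  then show False using tder eps by linarith
qed

lemma maxp:
  fixes \<Omega> :: "(real^'n) set" and \<phi> \<phi>t :: "(real^'n) \<times> real \<Rightarrow> real"
    and dA dB :: "'n \<Rightarrow> (real^'n) \<times> real \<Rightarrow> real"
  assumes om: "open \<Omega>" "bounded \<Omega>" and nu: "\<nu> \<ge> 0"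
    and cont: "continuous_on (closure \<Omega> \<times> {0..T}) \<phi>"
    and bd: "\<And>x t. x \<in> frontier \<Omega> \<Longrightarrow> t \<in> {0..T} \<Longrightarrow> \<phi> (x, t) \<le> 0"
    and ini: "\<And>x. x \<in> \<Omega> \<Longrightarrow> \<phi> (x, 0) \<le> 0"
    and dt: "\<And>x t. x \<in> \<Omega> \<Longrightarrow> t \<in> {0<..T} \<Longrightarrow> ((\<lambda>s. \<phi> (x, s)) has_real_derivative \<phi>t (x, t)) (at t)"
    and dd1: "\<And>x t j. x \<in> \<Omega> \<Longrightarrow> t \<in> {0<..T} \<Longrightarrow>
       ((\<lambda>h. \<phi> (x + h *\<^sub>R axis j 1, t)) has_real_derivative dA j (x, t)) (at 0)"
    and dd2: "\<And>x t j. x \<in> \<Omega> \<Longrightarrow> t \<in> {0<..T} \<Longrightarrow>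
       ((\<lambda>h. dA j (x + h *\<^sub>R axis j 1, t)) has_real_derivative dB j (x, t)) (at 0)"
    and heat: "\<And>x t. x \<in> \<Omega> \<Longrightarrow> t \<in> {0<..T} \<Longrightarrow> \<phi>t (x, t) = \<nu> * (\<Sum>j\<in>UNIV. dB j (x, t))"
    and z: "x \<in> closure \<Omega>" "t \<in> {0..T}"
  shows "\<phi> (x, t) \<le> 0"
proof (rule ccontr)
  assume "\<not> \<phi> (x, t) \<le> 0"
  then have p: "\<phi> (x, t) > 0" by simp
  define e where "e = \<phi> (x, t) / (2 * (\<bar>T\<bar> + 1))"
  have den: "2 * (\<bar>T\<bar> + 1) > 0" by simp
  have e: "e > 0" using p den unfolding e_def by simp
  have "\<phi> (x, t) - e * t \<le> 0"
    using maxp_eps[OF om nu cont bd ini dt dd1 dd2 heat e] z by auto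
  moreover have "e * t \<le> e * (\<bar>T\<bar> + 1)" using e z by (intro mult_left_mono) auto
  moreover have "e * (\<bar>T\<bar> + 1) = \<phi> (x, t) / 2" unfolding e_def using den by (simp add: field_simps)
  ultimately show False using p by linarith
qed



lemma pdx_slice:
  fixes Fz :: "((real^'n) \<times> real) \<Rightarrow> real^'m"
  assumes "smooth_on S Fz" "(x, t) \<in> S"
  shows "pdx i (\<lambda>y. Fz (y, t) $ k) x = Dd Fz (axis i 1, 0) (x, t) $ k"
  by (rule pdx_hasD[OF slice_hasD_comp[OF assms]])

lemma pdx_slice_s:
  fixes Fz :: "((real^'n) \<times> real) \<Rightarrow> real"
  assumes "smooth_on S Fz" "(x, t) \<in> S"
  shows "pdx i (\<lambda>y. Fz (y, t)) x = Dd Fz (axis i 1, 0) (x, t)"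
  by (rule pdx_hasD[OF slice_hasD[OF assms]])

lemma pdx2_slice:
  fixes Fz :: "((real^'n) \<times> real) \<Rightarrow> real^'m"
  assumes "open S" "smooth_on S Fz" "(x, t) \<in> S"
  shows "pdx j (\<lambda>y. pdx i (\<lambda>y'. Fz (y', t) $ k) y) x
       = Dd (Dd Fz (axis i 1, 0)) (axis j 1, 0) (x, t) $ k"
proof (rule pdx_eq_on[OF open_slice[OF assms(1), of t]])
  show "x \<in> {y. (y, t) \<in> S}" using assms by simp
  show "pdx i (\<lambda>y'. Fz (y', t) $ k) y = Dd Fz (axis i 1, 0) (y, t) $ k" if "y \<in> {y. (y, t) \<in> S}" for y
    using pdx_slice[OF assms(2)] that by simp
  show "((\<lambda>y. Dd Fz (axis i 1, 0) (y, t) $ k) has_derivative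
     (\<lambda>h. Dd (Dd Fz (axis i 1, 0)) (h, 0) (x, t) $ k)) (at x)"
    by (rule slice_hasD_comp[OF smooth_Dd[OF assms(2)] assms(3)])
qed

lemma pdx2_slice_s:
  fixes Fz :: "((real^'n) \<times> real) \<Rightarrow> real"
  assumes "open S" "smooth_on S Fz" "(x, t) \<in> S"
  shows "pdx j (\<lambda>y. pdx i (\<lambda>y'. Fz (y', t)) y) x
       = Dd (Dd Fz (axis i 1, 0)) (axis j 1, 0) (x, t)"
proof (rule pdx_eq_on[OF open_slice[OF assms(1), of t]])
  show "x \<in> {y. (y, t) \<in> S}" using assms by simp
  show "pdx i (\<lambda>y'. Fz (y', t)) y = Dd Fz (axis i 1, 0) (y, t)" if "y \<in> {y. (y, t) \<in> S}" for y
    using pdx_slice_s[OF assms(2)] that by simp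
  show "((\<lambda>y. Dd Fz (axis i 1, 0) (y, t)) has_derivative
     (\<lambda>h. Dd (Dd Fz (axis i 1, 0)) (h, 0) (x, t))) (at x)"
    by (rule slice_hasD[OF smooth_Dd[OF assms(2)] assms(3)])
qed

lemma pdx2_slice_diff:
  fixes Fz :: "((real^'n) \<times> real) \<Rightarrow> real^'n"
  assumes "open S" "smooth_on S Fz" "(x, t) \<in> S"
  shows "pdx j (\<lambda>y. pdx i (\<lambda>z. Fz (z, t) $ j) y - pdx j (\<lambda>z. Fz (z, t) $ i) y) x
       = Dd (Dd Fz (axis i 1, 0)) (axis j 1, 0) (x, t) $ j - Dd (Dd Fz (axis j 1, 0)) (axis j 1, 0) (x, t) $ i"
proof -
  have eq: "pdx i (\<lambda>z. Fz (z, t) $ j) y - pdx j (\<lambda>z. Fz (z, t) $ i) y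
     = Dd Fz (axis i 1, 0) (y, t) $ j - Dd Fz (axis j 1, 0) (y, t) $ i" if "y \<in> {y. (y, t) \<in> S}" for y
    using pdx_slice[OF assms(2)] that by simp
  have hd: "((\<lambda>y. Dd Fz (axis i 1, 0) (y, t) $ j - Dd Fz (axis j 1, 0) (y, t) $ i) has_derivative
     (\<lambda>h. Dd (Dd Fz (axis i 1, 0)) (h, 0) (x, t) $ j - Dd (Dd Fz (axis j 1, 0)) (h, 0) (x, t) $ i)) (at x)"
    by (intro has_derivative_diff slice_hasD_comp[OF smooth_Dd[OF assms(2)] assms(3)])
  have "x \<in> {y. (y, t) \<in> S}" using assms by simp
  from pdx_eq_on[OF open_slice[OF assms(1), of t] this eq hd] show ?thesis by simp
qed

lemma sumcomp_hasD:
  fixes W :: "'n::finite \<Rightarrow> 'a::real_normed_vector \<Rightarrow> real^'n"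
  assumes "\<And>i. smooth_on S (W i)" "z \<in> S"
  shows "((\<lambda>z. \<Sum>i\<in>UNIV. W i z $ i) has_derivative (\<lambda>h. \<Sum>i\<in>UNIV. Dd (W i) h z $ i)) (at z)"
  by (intro has_derivative_sum comp_hasD[OF assms(1) assms(2)])

lemma sumcomp_cont:
  fixes W :: "'n::finite \<Rightarrow> 'a::real_normed_vector \<Rightarrow> real^'n"
  assumes "\<And>i. smooth_on S (W i)"
  shows "continuous_on S (\<lambda>z. \<Sum>i\<in>UNIV. W i z $ i)"
  by (intro continuous_on_sum continuous_on_component smooth_cont assms)

lemma hasD_time:
  fixes f :: "((real^'n) \<times> real) \<Rightarrow> real"
  assumes "(f has_derivative f') (at (x, t))"
  shows "((\<lambda>s. f (x, s)) has_real_derivative f' (0, 1)) (at t)"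
proof -
  have "((\<lambda>h. f ((x, t) + h *\<^sub>R (0, 1))) has_real_derivative f' (0, 1)) (at 0)"
    by (rule line_rd[OF assms])
  then have "((\<lambda>h. f (x, h + t)) has_real_derivative f' (0, 1)) (at 0)" by (simp add: add.commute)
  then show ?thesis using DERIV_shift[of "\<lambda>s. f (x, s)" "f' (0, 1)" 0 t] by simp
qed

lemma hasD_space:
  fixes f :: "((real^'n) \<times> real) \<Rightarrow> real"
  assumes "(f has_derivative f') (at (x, t))"
  shows "((\<lambda>h. f (x + h *\<^sub>R axis j 1, t)) has_real_derivative f' (axis j 1, 0)) (at 0)"
proof -
  have "((\<lambda>h. f ((x, t) + h *\<^sub>R (axis j 1, 0))) has_real_derivative f' (axis j 1, 0)) (at 0)"
    by (rule line_rd[OF assms])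
  then show ?thesis by simp
qed

lemma Dd_cong_smooth:
  assumes "open S" "smooth_on S F" "z \<in> S" "\<And>y. y \<in> S \<Longrightarrow> F y = G y"
  shows "Dd G a z = Dd F a z"
  using Dd_cong[OF assms(1,3,4) smooth_hasD[OF assms(2,3)]] by simp



lemma cross_zero:
  fixes n a :: "real^'n"
  assumes "n \<noteq> 0" "\<And>i j. n $ i * a $ j = n $ j * a $ i" "n \<bullet> a = 0"
  shows "a = 0"
proof (subst vec_eq_iff, rule allI)
  fix j
  have "a $ j * (n \<bullet> n) = (\<Sum>i\<in>UNIV. n $ i * (n $ i * a $ j))"
    by (simp add: inner_vec_def sum_distrib_left algebra_simps)
  also have "\<dots> = (\<Sum>i\<in>UNIV. n $ i * (n $ j * a $ i))" using assms(2) by simp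
  also have "\<dots> = n $ j * (n \<bullet> a)"
    by (simp add: inner_vec_def sum_distrib_left algebra_simps)
  finally have "a $ j * (n \<bullet> n) = 0" using assms(3) by simp
  moreover have "n \<bullet> n \<noteq> 0" using assms(1) by simp
  ultimately show "a $ j = 0 $ j" by simp
qed

theorem mainTheorem3:
  fixes \<Omega> E :: "(real^'n) set"
    and nrm :: "real^'n \<Rightarrow> real^'n"
    and u f g :: "real^'n \<Rightarrow> real \<Rightarrow> real^'n"
    and p :: "real^'n \<Rightarrow> real \<Rightarrow> real"
    and u0 :: "real^'n \<Rightarrow> real^'n"
    and \<nu> lam T :: real
  assumes dim: "CARD('n) = 2 \<or> CARD('n) = 3"
    and dom: "open \<Omega>" "bounded \<Omega>" "connected \<Omega>" "\<Omega> \<noteq> {}"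
    and bdry: "pw_smooth_boundary \<Omega> E nrm"
    and nu: "\<nu> > 0" and lampos: "lam > 0"
    and smooth: "\<exists>S. open S \<and> closure \<Omega> \<times> {0..T} \<subseteq> S \<and>
        smooth_on S (\<lambda>z. u (fst z) (snd z)) \<and> smooth_on S (\<lambda>z. p (fst z) (snd z)) \<and>
        smooth_on S (\<lambda>z. f (fst z) (snd z)) \<and> smooth_on S (\<lambda>z. g (fst z) (snd z))"
    and mom: "\<And>x t. x \<in> \<Omega> \<Longrightarrow> t \<in> {0<..T} \<Longrightarrow>
        pdt u x t + conv (\<lambda>y. u y t) x
          = \<nu> *\<^sub>R vlap (\<lambda>y. u y t) x - sgrad (\<lambda>y. p y t) x + f x t"
    and tang: "\<And>x t. x \<in> frontier \<Omega> - E \<Longrightarrow> t \<in> {0..T} \<Longrightarrow>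
        cross_eq (nrm x) (u x t) (g x t)"
    and divbd: "\<And>x t. x \<in> frontier \<Omega> \<Longrightarrow> t \<in> {0..T} \<Longrightarrow> vdiv (\<lambda>y. u y t) x = 0"
    and ppe: "\<And>x t. x \<in> \<Omega> \<Longrightarrow> t \<in> {0<..T} \<Longrightarrow>
        slap (\<lambda>y. p y t) x = vdiv (\<lambda>y. f y t - conv (\<lambda>z. u z t) y) x"
    and neum: "\<And>x t. x \<in> frontier \<Omega> - E \<Longrightarrow> t \<in> {0..T} \<Longrightarrow>
        nrm x \<bullet> sgrad (\<lambda>y. p y t) x
          = nrm x \<bullet> (f x t - pdt g x t - \<nu> *\<^sub>R curlcurl (\<lambda>y. u y t) x - conv (\<lambda>y. u y t) x)
            + lam * (nrm x \<bullet> (u x t - g x t))"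
    and init: "\<And>x. x \<in> closure \<Omega> \<Longrightarrow> u x 0 = u0 x"
    and div0: "\<And>x. x \<in> \<Omega> \<Longrightarrow> vdiv u0 x = 0"
    and comp: "\<And>x. x \<in> frontier \<Omega> \<Longrightarrow> u0 x = g x 0"
  shows "(\<forall>x\<in>\<Omega>. \<forall>t\<in>{0<..T}.
            pdt u x t + conv (\<lambda>y. u y t) x
              = \<nu> *\<^sub>R vlap (\<lambda>y. u y t) x - sgrad (\<lambda>y. p y t) x + f x t
          \<and> vdiv (\<lambda>y. u y t) x = 0)
       \<and> (\<forall>x\<in>frontier \<Omega>. \<forall>t\<in>{0..T}. u x t = g x t)
       \<and> (\<forall>x\<in>\<Omega>. u x 0 = u0 x)"
proof (cases "T < 0")
  case True
  then show ?thesis using init closure_subset by auto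
next
  case False
  then have T0: "T \<ge> 0" by simp
  obtain S where S: "open S" "closure \<Omega> \<times> {0..T} \<subseteq> S"
    and sU0: "smooth_on S (\<lambda>z. u (fst z) (snd z))" and sP0: "smooth_on S (\<lambda>z. p (fst z) (snd z))"
    and sF0: "smooth_on S (\<lambda>z. f (fst z) (snd z))" and sG0: "smooth_on S (\<lambda>z. g (fst z) (snd z))"
    using smooth by blast
  define U where "U = (\<lambda>z. u (fst z) (snd z))"
  define P where "P = (\<lambda>z. p (fst z) (snd z))"
  define Fv where "Fv = (\<lambda>z. f (fst z) (snd z))"
  define Gv where "Gv = (\<lambda>z. g (fst z) (snd z))"
  have sU: "smooth_on S U" and sP: "smooth_on S P" and sF: "smooth_on S Fv" and sG: "smooth_on S Gv"
    using sU0 sP0 sF0 sG0 unfolding U_def P_def Fv_def Gv_def by auto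
  have fr_cl: "frontier \<Omega> \<subseteq> closure \<Omega>" by (simp add: frontier_def)
  have inS: "(x, t) \<in> S" if "x \<in> closure \<Omega>" "t \<in> {0..T}" for x t using S(2) that by auto
  have inS': "(x, t) \<in> S" if "x \<in> \<Omega>" "t \<in> {0..T}" for x t using inS that closure_subset by auto
  have inSb: "(x, t) \<in> S" if "x \<in> frontier \<Omega>" "t \<in> {0..T}" for x t using inS that fr_cl by auto
  have pU: "pdx i (\<lambda>y. u y t $ k) x = Dd U (axis i 1, 0) (x, t) $ k" if "(x, t) \<in> S" for x t i k
    using pdx_slice[OF sU that, of i k] by (simp add: U_def)
  have pU2: "pdx j (\<lambda>y. pdx i (\<lambda>y'. u y' t $ k) y) x = Dd (Dd U (axis i 1, 0)) (axis j 1, 0) (x, t) $ k"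
    if "(x, t) \<in> S" for x t i j k
    using pdx2_slice[OF S(1) sU that, of j i k] by (simp add: U_def)
  have pP: "pdx i (\<lambda>y. p y t) x = Dd P (axis i 1, 0) (x, t)" if "(x, t) \<in> S" for x t i
    using pdx_slice_s[OF sP that, of i] by (simp add: P_def)
  have pP2: "pdx j (\<lambda>y. pdx i (\<lambda>y'. p y' t) y) x = Dd (Dd P (axis i 1, 0)) (axis j 1, 0) (x, t)"
    if "(x, t) \<in> S" for x t i j
    using pdx2_slice_s[OF S(1) sP that, of j i] by (simp add: P_def)
  have ptU: "pdt u x t = Dd U (0, 1) (x, t)" if "(x, t) \<in> S" for x t
    using pdt_eq[OF sU that] by (simp add: U_def pdt_def)
  have ptG: "pdt g x t = Dd Gv (0, 1) (x, t)" if "(x, t) \<in> S" for x t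
    using pdt_eq[OF sG that] by (simp add: Gv_def pdt_def)
  have convU: "conv (\<lambda>y. u y t) x $ k = (\<Sum>j\<in>UNIV. U (x, t) $ j * Dd U (axis j 1, 0) (x, t) $ k)"
    if "(x, t) \<in> S" for x t k
    unfolding conv_def using pU[OF that] by (simp add: U_def)
  have vlapU: "vlap (\<lambda>y. u y t) x $ k = (\<Sum>i\<in>UNIV. Dd (Dd U (axis i 1, 0)) (axis i 1, 0) (x, t) $ k)"
    if "(x, t) \<in> S" for x t k
    unfolding vlap_def slap_def using pU2[OF that] by simp
  have sgradP: "sgrad (\<lambda>y. p y t) x $ k = Dd P (axis k 1, 0) (x, t)" if "(x, t) \<in> S" for x t k
    unfolding sgrad_def using pP[OF that] by simp
  have ccU: "curlcurl (\<lambda>y. u y t) x $ i = (\<Sum>j\<in>UNIV. Dd (Dd U (axis i 1, 0)) (axis j 1, 0) (x, t) $ j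
      - Dd (Dd U (axis j 1, 0)) (axis j 1, 0) (x, t) $ i)" if "(x, t) \<in> S" for x t i
    unfolding curlcurl_def using pdx2_slice_diff[OF S(1) sU that] by (simp add: U_def)
  define \<Phi> where "\<Phi> z = (\<Sum>i\<in>UNIV. Dd U (axis i 1, 0) z $ i)" for z
  define \<Phi>1 where "\<Phi>1 j z = (\<Sum>i\<in>UNIV. Dd (Dd U (axis i 1, 0)) (axis j 1, 0) z $ i)" for j z
  define \<Phi>2 where "\<Phi>2 j z = (\<Sum>i\<in>UNIV. Dd (Dd (Dd U (axis i 1, 0)) (axis j 1, 0)) (axis j 1, 0) z $ i)" for j z
  define \<Phi>t where "\<Phi>t z = (\<Sum>i\<in>UNIV. Dd (Dd U (axis i 1, 0)) (0, 1) z $ i)" for z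
  have vdivU: "vdiv (\<lambda>y. u y t) x = \<Phi> (x, t)" if "(x, t) \<in> S" for x t
    unfolding vdiv_def \<Phi>_def using pU[OF that] by simp
  have PhiD: "(\<Phi> has_derivative (\<lambda>h. \<Sum>i\<in>UNIV. Dd (Dd U (axis i 1, 0)) h z $ i)) (at z)" if "z \<in> S" for z
    unfolding \<Phi>_def by (rule sumcomp_hasD[OF smooth_Dd[OF sU] that])
  have Phi1D: "(\<Phi>1 j has_derivative (\<lambda>h. \<Sum>i\<in>UNIV. Dd (Dd (Dd U (axis i 1, 0)) (axis j 1, 0)) h z $ i)) (at z)"
    if "z \<in> S" for z j
    unfolding \<Phi>1_def by (rule sumcomp_hasD[OF smooth_Dd[OF smooth_Dd[OF sU]] that])
  have Phicont: "continuous_on S \<Phi>" unfolding \<Phi>_def by (rule sumcomp_cont[OF smooth_Dd[OF sU]])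
  have Phi1cont: "continuous_on S (\<Phi>1 j)" for j
    unfolding \<Phi>1_def by (rule sumcomp_cont[OF smooth_Dd[OF smooth_Dd[OF sU]]])
  \<comment> \<open>the heat equation for the divergence\<close>
  have heat: "\<Phi>t (x, t) = \<nu> * (\<Sum>j\<in>UNIV. \<Phi>2 j (x, t))" if x: "x \<in> \<Omega>" and t: "t \<in> {0<..T}" for x t
  proof -
    have T: "t \<in> {0..T}" using t by auto
    have z: "(x, t) \<in> S" using inS'[OF x T] .
    define Ot where "Ot = \<Omega> \<inter> {y. (y, t) \<in> S}"
    have O: "open Ot" "x \<in> Ot" unfolding Ot_def using open_slice[OF S(1)] dom(1) z x by auto
    define X where "X a b c = Dd (Dd (Dd U (axis a 1, 0)) (axis b 1, 0)) (axis c 1, 0) (x, t)" for a b c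
    have Bk: "(f y t - conv (\<lambda>z. u z t) y) $ k = Dd U (0, 1) (y, t) $ k
        - \<nu> * (\<Sum>i\<in>UNIV. Dd (Dd U (axis i 1, 0)) (axis i 1, 0) (y, t) $ k) + Dd P (axis k 1, 0) (y, t)"
      if "y \<in> Ot" for y k
    proof -
      have y: "y \<in> \<Omega>" "(y, t) \<in> S" using that Ot_def by auto
      have "(pdt u y t + conv (\<lambda>y. u y t) y) $ k
          = (\<nu> *\<^sub>R vlap (\<lambda>y. u y t) y - sgrad (\<lambda>y. p y t) y + f y t) $ k"
        using mom[OF y(1) t] by simp
      then show ?thesis using ptU[OF y(2)] vlapU[OF y(2)] sgradP[OF y(2)] by simp
    qed
    have Bd: "((\<lambda>y. Dd U (0, 1) (y, t) $ k
        - \<nu> * (\<Sum>i\<in>UNIV. Dd (Dd U (axis i 1, 0)) (axis i 1, 0) (y, t) $ k) + Dd P (axis k 1, 0) (y, t))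
        has_derivative (\<lambda>h. Dd (Dd U (0, 1)) (h, 0) (x, t) $ k
        - \<nu> * (\<Sum>i\<in>UNIV. Dd (Dd (Dd U (axis i 1, 0)) (axis i 1, 0)) (h, 0) (x, t) $ k)
        + Dd (Dd P (axis k 1, 0)) (h, 0) (x, t))) (at x)" for k
      by (intro has_derivative_add has_derivative_diff has_derivative_mult_right has_derivative_sum
          slice_hasD_comp[OF _ z] slice_hasD[OF _ z] smooth_Dd sU sP)
    have pB: "pdx k (\<lambda>y. (f y t - conv (\<lambda>z. u z t) y) $ k) x = Dd (Dd U (0, 1)) (axis k 1, 0) (x, t) $ k
        - \<nu> * (\<Sum>i\<in>UNIV. X i i k $ k) + Dd (Dd P (axis k 1, 0)) (axis k 1, 0) (x, t)" for k
      using pdx_eq_on[OF O Bk Bd] unfolding X_def by simp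
    have "slap (\<lambda>y. p y t) x = (\<Sum>k\<in>UNIV. Dd (Dd P (axis k 1, 0)) (axis k 1, 0) (x, t))"
      unfolding slap_def using pP2[OF z] by simp
    moreover have "slap (\<lambda>y. p y t) x = (\<Sum>k\<in>UNIV. pdx k (\<lambda>y. (f y t - conv (\<lambda>z. u z t) y) $ k) x)"
      using ppe[OF x t] unfolding vdiv_def by simp
    ultimately have "(\<Sum>k\<in>UNIV. Dd (Dd P (axis k 1, 0)) (axis k 1, 0) (x, t))
       = (\<Sum>k\<in>UNIV. Dd (Dd U (0, 1)) (axis k 1, 0) (x, t) $ k
        - \<nu> * (\<Sum>i\<in>UNIV. X i i k $ k) + Dd (Dd P (axis k 1, 0)) (axis k 1, 0) (x, t))"
      using pB by simp
    then have e1: "(\<Sum>k\<in>UNIV. Dd (Dd U (0, 1)) (axis k 1, 0) (x, t) $ k)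
        = \<nu> * (\<Sum>k\<in>UNIV. \<Sum>i\<in>UNIV. X i i k $ k)"
      by (simp add: sum.distrib sum_subtractf sum_distrib_left)
    have symX: "X i i k = X k i i" for i k
    proof -
      have "X i i k = Dd (Dd (Dd U (axis i 1, 0)) (axis k 1, 0)) (axis i 1, 0) (x, t)"
        unfolding X_def by (rule Dd_sym[OF S(1) smooth_Dd[OF sU] z])
      also have "\<dots> = X k i i" unfolding X_def
        by (rule Dd_cong_smooth[OF S(1) smooth_Dd[OF smooth_Dd[OF sU]] z])
           (rule Dd_sym[OF S(1) sU])
      finally show ?thesis .
    qed
    have "\<Phi>t (x, t) = (\<Sum>k\<in>UNIV. Dd (Dd U (0, 1)) (axis k 1, 0) (x, t) $ k)"
      unfolding \<Phi>t_def using Dd_sym[OF S(1) sU z] by simp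
    also have "\<dots> = \<nu> * (\<Sum>k\<in>UNIV. \<Sum>i\<in>UNIV. X k i i $ k)" using e1 symX by simp
    also have "\<dots> = \<nu> * (\<Sum>j\<in>UNIV. \<Phi>2 j (x, t))"
    proof -
      have "(\<Sum>j\<in>UNIV. \<Phi>2 j (x, t)) = (\<Sum>j\<in>UNIV. \<Sum>i\<in>UNIV. X i j j $ i)"
        unfolding \<Phi>2_def X_def by simp
      also have "\<dots> = (\<Sum>i\<in>UNIV. \<Sum>j\<in>UNIV. X i j j $ i)" by (rule sum.swap)
      finally show ?thesis by simp
    qed
    finally show ?thesis .
  qed
  have nuge: "\<nu> \<ge> 0" using nu by simp
  have dtP: "((\<lambda>s. \<Phi> (x, s)) has_real_derivative \<Phi>t (x, t)) (at t)" if "(x, t) \<in> S" for x t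
    using hasD_time[OF PhiD[OF that]] unfolding \<Phi>t_def by simp
  have d1P: "((\<lambda>h. \<Phi> (x + h *\<^sub>R axis j 1, t)) has_real_derivative \<Phi>1 j (x, t)) (at 0)"
    if "(x, t) \<in> S" for x t j
    using hasD_space[OF PhiD[OF that], of j] unfolding \<Phi>1_def by simp
  have d2P: "((\<lambda>h. \<Phi>1 j (x + h *\<^sub>R axis j 1, t)) has_real_derivative \<Phi>2 j (x, t)) (at 0)"
    if "(x, t) \<in> S" for x t j
    using hasD_space[OF Phi1D[OF that], of j] unfolding \<Phi>2_def by simp
  have bdP: "\<Phi> (x, t) = 0" if "x \<in> frontier \<Omega>" "t \<in> {0..T}" for x t
    using divbd[OF that] vdivU[OF inSb[OF that]] by simp
  have iniP: "\<Phi> (x, 0) = 0" if x: "x \<in> \<Omega>" for x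
  proof -
    have x0: "(x, 0) \<in> S" using inS'[OF x] T0 by auto
    have "pdx i (\<lambda>y. u0 y $ i) x = Dd U (axis i 1, 0) (x, 0) $ i" for i
    proof (rule pdx_eq_on[OF dom(1) x])
      show "u0 y $ i = U (y, 0) $ i" if "y \<in> \<Omega>" for y
      proof -
        have "y \<in> closure \<Omega>" using that closure_subset by blast
        then show ?thesis using init[of y] unfolding U_def by simp
      qed
      show "((\<lambda>y. U (y, 0) $ i) has_derivative (\<lambda>h. Dd U (h, 0) (x, 0) $ i)) (at x)"
        by (rule slice_hasD_comp[OF sU x0])
    qed
    then have "vdiv u0 x = \<Phi> (x, 0)" unfolding vdiv_def \<Phi>_def by simp
    then show ?thesis using div0[OF x] by simp
  qed
  have PhiS: "continuous_on (closure \<Omega> \<times> {0..T}) \<Phi>" using continuous_on_subset[OF Phicont S(2)] .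
  have Phi_le: "\<Phi> (x, t) \<le> 0" if "x \<in> closure \<Omega>" "t \<in> {0..T}" for x t
  proof (rule maxp[where \<phi>t=\<Phi>t and dA=\<Phi>1 and dB=\<Phi>2, OF dom(1) dom(2) nuge PhiS _ _ _ _ _ heat that])
    show "\<Phi> (x, t) \<le> 0" if "x \<in> frontier \<Omega>" "t \<in> {0..T}" for x t using bdP[OF that] by simp
    show "\<Phi> (x, 0) \<le> 0" if "x \<in> \<Omega>" for x using iniP[OF that] by simp
    show "((\<lambda>s. \<Phi> (x, s)) has_real_derivative \<Phi>t (x, t)) (at t)" if "x \<in> \<Omega>" "t \<in> {0<..T}" for x t
      using dtP inS' that by auto
    show "((\<lambda>h. \<Phi> (x + h *\<^sub>R axis j 1, t)) has_real_derivative \<Phi>1 j (x, t)) (at 0)"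
      if "x \<in> \<Omega>" "t \<in> {0<..T}" for x t j using d1P inS' that by auto
    show "((\<lambda>h. \<Phi>1 j (x + h *\<^sub>R axis j 1, t)) has_real_derivative \<Phi>2 j (x, t)) (at 0)"
      if "x \<in> \<Omega>" "t \<in> {0<..T}" for x t j using d2P inS' that by auto
  qed
  have Phi_ge: "- \<Phi> (x, t) \<le> 0" if "x \<in> closure \<Omega>" "t \<in> {0..T}" for x t
  proof (rule maxp[where \<phi>="\<lambda>z. - \<Phi> z" and \<phi>t="\<lambda>z. - \<Phi>t z" and dA="\<lambda>j z. - \<Phi>1 j z"
        and dB="\<lambda>j z. - \<Phi>2 j z", OF dom(1) dom(2) nuge _ _ _ _ _ _ _ that])
    show "continuous_on (closure \<Omega> \<times> {0..T}) (\<lambda>z. - \<Phi> z)" using PhiS by (intro continuous_intros)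
    show "- \<Phi> (x, t) \<le> 0" if "x \<in> frontier \<Omega>" "t \<in> {0..T}" for x t using bdP[OF that] by simp
    show "- \<Phi> (x, 0) \<le> 0" if "x \<in> \<Omega>" for x using iniP[OF that] by simp
    show "((\<lambda>s. - \<Phi> (x, s)) has_real_derivative - \<Phi>t (x, t)) (at t)" if "x \<in> \<Omega>" "t \<in> {0<..T}" for x t
      using DERIV_minus[OF dtP] inS' that by auto
    show "((\<lambda>h. - \<Phi> (x + h *\<^sub>R axis j 1, t)) has_real_derivative - \<Phi>1 j (x, t)) (at 0)"
      if "x \<in> \<Omega>" "t \<in> {0<..T}" for x t j using DERIV_minus[OF d1P] inS' that by auto
    show "((\<lambda>h. - \<Phi>1 j (x + h *\<^sub>R axis j 1, t)) has_real_derivative - \<Phi>2 j (x, t)) (at 0)"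
      if "x \<in> \<Omega>" "t \<in> {0<..T}" for x t j using DERIV_minus[OF d2P] inS' that by auto
    show "- \<Phi>t (x, t) = \<nu> * (\<Sum>j\<in>UNIV. - \<Phi>2 j (x, t))" if "x \<in> \<Omega>" "t \<in> {0<..T}" for x t
      using heat[OF that] by (simp add: sum_negf)
  qed
  have Phi0: "\<Phi> (x, t) = 0" if "x \<in> closure \<Omega>" "t \<in> {0..T}" for x t
    using Phi_le[OF that] Phi_ge[OF that] by simp
  have part1: "\<forall>x\<in>\<Omega>. \<forall>t\<in>{0<..T}.
            pdt u x t + conv (\<lambda>y. u y t) x
              = \<nu> *\<^sub>R vlap (\<lambda>y. u y t) x - sgrad (\<lambda>y. p y t) x + f x t
          \<and> vdiv (\<lambda>y. u y t) x = 0"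
  proof (intro ballI conjI)
    fix x t assume x: "x \<in> \<Omega>" and t: "t \<in> {0<..T}"
    show "pdt u x t + conv (\<lambda>y. u y t) x = \<nu> *\<^sub>R vlap (\<lambda>y. u y t) x - sgrad (\<lambda>y. p y t) x + f x t"
      by (rule mom[OF x t])
    have xt: "x \<in> closure \<Omega>" "t \<in> {0..T}" using x t closure_subset by auto
    show "vdiv (\<lambda>y. u y t) x = 0" using vdivU[OF inS[OF xt]] Phi0[OF xt] by simp
  qed
  have part3: "\<forall>x\<in>\<Omega>. u x 0 = u0 x" using init closure_subset by auto
  have Phi1_0: "\<Phi>1 j (x, t) = 0" if xt: "x \<in> closure \<Omega>" "t \<in> {0..T}" for x t j
  proof -
    have inner: "\<Phi>1 j (y, s) = 0" if ys: "y \<in> \<Omega>" "s \<in> {0..T}" for y s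
    proof -
      obtain r where r: "r > 0" "ball y r \<subseteq> \<Omega>" using dom(1) ys(1) openE by blast
      have le: "\<forall>h. \<bar>0 - h\<bar> < r \<longrightarrow> \<Phi> (y + h *\<^sub>R axis j 1, s) \<le> \<Phi> (y + 0 *\<^sub>R axis j 1, s)"
      proof (intro allI impI)
        fix h :: real assume h: "\<bar>0 - h\<bar> < r"
        have "dist y (y + h *\<^sub>R axis j 1) = \<bar>h\<bar>" by (simp add: dist_norm)
        then have "y + h *\<^sub>R axis j 1 \<in> \<Omega>" using r h by auto
        then have "y + h *\<^sub>R axis j 1 \<in> closure \<Omega>" using closure_subset by blast
        moreover have "y \<in> closure \<Omega>" using ys closure_subset by blast
        ultimately show "\<Phi> (y + h *\<^sub>R axis j 1, s) \<le> \<Phi> (y + 0 *\<^sub>R axis j 1, s)"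
          using Phi0 ys by simp
      qed
      show ?thesis using DERIV_local_max[OF d1P[OF inS'[OF ys]] r(1) le] .
    qed
    have cl: "closure (\<Omega> \<times> {0..T}) = closure \<Omega> \<times> {0..T}" by (simp add: closure_Times)
    have "continuous_on (closure (\<Omega> \<times> {0..T})) (\<Phi>1 j)"
      using continuous_on_subset[OF Phi1cont S(2)] cl by simp
    then show ?thesis
      using continuous_constant_on_closure[of "\<Omega> \<times> {0..T}" "\<Phi>1 j" 0 "(x, t)"] inner cl xt by auto
  qed
  define Cv where "Cv z = (\<chi> k. \<Sum>j\<in>UNIV. U z $ j * Dd U (axis j 1, 0) z $ k)" for z
  define Lv where "Lv z = (\<chi> k. \<Sum>i\<in>UNIV. Dd (Dd U (axis i 1, 0)) (axis i 1, 0) z $ k)" for z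
  define Pgv where "Pgv z = (\<chi> k. Dd P (axis k 1, 0) z)" for z
  define M where "M z = Dd U (0, 1) z + Cv z - (\<nu> *\<^sub>R Lv z - Pgv z + Fv z)" for z
  have idC: "conv (\<lambda>y. u y t) x = Cv (x, t)" if "(x, t) \<in> S" for x t
    unfolding Cv_def vec_eq_iff using convU[OF that] by simp
  have idL: "vlap (\<lambda>y. u y t) x = Lv (x, t)" if "(x, t) \<in> S" for x t
    unfolding Lv_def vec_eq_iff using vlapU[OF that] by simp
  have idP: "sgrad (\<lambda>y. p y t) x = Pgv (x, t)" if "(x, t) \<in> S" for x t
    unfolding Pgv_def vec_eq_iff using sgradP[OF that] by simp
  have Mcont: "continuous_on S M" unfolding M_def Cv_def Lv_def Pgv_def
    by (intro continuous_intros smooth_cont smooth_Dd sU sP sF)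
  have M0: "M (x, t) = 0" if "x \<in> \<Omega>" "t \<in> {0<..T}" for x t
  proof -
    have xt: "(x, t) \<in> S" using inS' that by auto
    show ?thesis using mom[OF that] unfolding M_def
      using idC[OF xt] idL[OF xt] idP[OF xt] ptU[OF xt] by (simp add: Fv_def)
  qed
  have Mcl: "M (x, t) = 0" if "x \<in> closure \<Omega>" "t \<in> {0<..T}" for x t
  proof -
    have c1: "closure {0<..T} \<subseteq> {0..T}" by (rule closure_minimal) auto
    have cl: "closure (\<Omega> \<times> {0<..T}) = closure \<Omega> \<times> closure {0<..T}" by (simp add: closure_Times)
    have "closure (\<Omega> \<times> {0<..T}) \<subseteq> S" using cl c1 S(2) by auto
    then have "continuous_on (closure (\<Omega> \<times> {0<..T})) M" using continuous_on_subset[OF Mcont] by blast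
    moreover have "(x, t) \<in> closure (\<Omega> \<times> {0<..T})" using cl that closure_subset by auto
    ultimately show ?thesis using continuous_constant_on_closure[of "\<Omega> \<times> {0<..T}" M 0 "(x, t)"] M0 by auto
  qed
  have LCC: "vlap (\<lambda>y. u y t) x + curlcurl (\<lambda>y. u y t) x = 0" if xt: "x \<in> closure \<Omega>" "t \<in> {0..T}" for x t
  proof (subst vec_eq_iff, rule allI)
    fix k
    have z: "(x, t) \<in> S" using inS[OF xt] .
    have "\<Phi>1 k (x, t) = (\<Sum>i\<in>UNIV. Dd (Dd U (axis k 1, 0)) (axis i 1, 0) (x, t) $ i)"
      unfolding \<Phi>1_def using Dd_sym[OF S(1) sU z] by simp
    then have "(\<Sum>i\<in>UNIV. Dd (Dd U (axis k 1, 0)) (axis i 1, 0) (x, t) $ i) = 0" using Phi1_0[OF xt] by simp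
    then show "(vlap (\<lambda>y. u y t) x + curlcurl (\<lambda>y. u y t) x) $ k = 0 $ k"
      using vlapU[OF z] ccU[OF z] by (simp add: sum_subtractf)
  qed
  have wD: "((\<lambda>s. n \<bullet> (U (x, s) - Gv (x, s))) has_real_derivative n \<bullet> (Dd U (0, 1) (x, t) - Dd Gv (0, 1) (x, t))) (at t)"
    if "(x, t) \<in> S" for x t n
  proof -
    have "((\<lambda>z. n \<bullet> (U z - Gv z)) has_derivative (\<lambda>h. n \<bullet> (Dd U h (x, t) - Dd Gv h (x, t)))) (at (x, t))"
      by (intro has_derivative_inner_right has_derivative_diff smooth_hasD[OF sU that] smooth_hasD[OF sG that])
    from hasD_time[OF this] show ?thesis by simp
  qed
  have ode: "nrm x \<bullet> (Dd U (0, 1) (x, t) - Dd Gv (0, 1) (x, t)) = - lam * (nrm x \<bullet> (U (x, t) - Gv (x, t)))"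
    if x: "x \<in> frontier \<Omega> - E" and t: "t \<in> {0<..T}" for x t
  proof -
    have xc: "x \<in> closure \<Omega>" using x fr_cl by auto
    have tT: "t \<in> {0..T}" using t by auto
    have z: "(x, t) \<in> S" using inS[OF xc tT] .
    define n where "n = nrm x"
    define A where "A = Dd U (0, 1) (x, t)"
    define C where "C = conv (\<lambda>y. u y t) x"
    define L where "L = vlap (\<lambda>y. u y t) x"
    define Pg where "Pg = sgrad (\<lambda>y. p y t) x"
    define CC where "CC = curlcurl (\<lambda>y. u y t) x"
    define Gt where "Gt = Dd Gv (0, 1) (x, t)"
    have "M (x, t) = 0" using Mcl[OF xc t] .
    then have h: "A + C - (\<nu> *\<^sub>R L - Pg + f x t) = 0"
      unfolding M_def A_def C_def L_def Pg_def idC[OF z] idL[OF z] idP[OF z] by (simp add: Fv_def)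
    then have A: "A = \<nu> *\<^sub>R L - Pg + f x t - C"
      by (metis add_diff_cancel_right' diff_add_cancel eq_iff_diff_eq_0)
    have CC: "CC = - L" using LCC[OF xc tT] unfolding CC_def L_def by (simp add: add_eq_0_iff2)
    have N: "n \<bullet> Pg = n \<bullet> (f x t - Gt - \<nu> *\<^sub>R CC - C) + lam * (n \<bullet> (u x t - g x t))"
      using neum[OF x tT] ptG[OF z] unfolding n_def Pg_def Gt_def CC_def C_def by simp
    have "n \<bullet> (A - Gt) = - lam * (n \<bullet> (u x t - g x t))"
      using N unfolding A CC by (simp add: inner_diff_right inner_add_right inner_minus_right)
    then show ?thesis unfolding n_def A_def Gt_def U_def Gv_def by simp
  qed
  have nrm_nz: "nrm x \<noteq> 0" if "x \<in> frontier \<Omega> - E" for x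
  proof -
    from bdry[unfolded pw_smooth_boundary_def] that obtain Uo \<rho> where
      "sgrad \<rho> x \<noteq> 0" "nrm x = sgrad \<rho> x /\<^sub>R norm (sgrad \<rho> x)" "x \<in> Uo" "\<forall>y\<in>Uo. sgrad \<rho> y \<noteq> 0"
      by blast
    then have "norm (nrm x) = 1" by simp
    then show ?thesis by auto
  qed
  have part2a: "u x t = g x t" if x: "x \<in> frontier \<Omega> - E" and tT: "t \<in> {0..T}" for x t
  proof -
    have xc: "x \<in> closure \<Omega>" using x fr_cl by auto
    define n where "n = nrm x"
    define w where "w s = n \<bullet> (U (x, s) - Gv (x, s))" for s
    have w0: "w 0 = 0" unfolding w_def U_def Gv_def using init[OF xc] comp[of x] x by simp
    have wt: "w t = 0"
    proof (cases "t = 0")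
      case True then show ?thesis using w0 by simp
    next
      case False
      then have tp: "0 < t" using tT by simp
      define y where "y s = w s * exp (lam * s)" for s
      have wDs: "(w has_real_derivative n \<bullet> (Dd U (0, 1) (x, s) - Dd Gv (0, 1) (x, s))) (at s)"
        if "0 \<le> s" "s \<le> t" for s
        unfolding w_def using wD[OF inS[OF xc]] that tT by auto
      have "continuous_on {0..t} y" unfolding y_def
        by (intro continuous_on_mult continuous_intros continuous_at_imp_continuous_on ballI DERIV_isCont) (use wDs in auto)
      moreover have "DERIV y s :> 0" if "0 < s" "s < t" for s
      proof -
        have sT: "s \<in> {0<..T}" using that tT by auto
        have d: "DERIV y s :> (n \<bullet> (Dd U (0, 1) (x, s) - Dd Gv (0, 1) (x, s))) * exp (lam * s) + w s * (exp (lam * s) * lam)"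
          unfolding y_def using wDs[of s] that by (auto intro!: derivative_eq_intros)
        have "n \<bullet> (Dd U (0, 1) (x, s) - Dd Gv (0, 1) (x, s)) = - lam * w s"
          using ode[OF x sT] unfolding n_def w_def .
        note e = this
        have "(n \<bullet> (Dd U (0, 1) (x, s) - Dd Gv (0, 1) (x, s))) * exp (lam * s) + w s * (exp (lam * s) * lam) = 0"
          unfolding e by (simp add: algebra_simps)
        then show ?thesis using d by metis
      qed
      ultimately have "y t = y 0" using DERIV_isconst_end[OF tp] by blast
      then show ?thesis using w0 unfolding y_def by simp
    qed
    have "u x t - g x t = 0"
    proof (rule cross_zero[OF nrm_nz[OF x]])
      show "nrm x $ i * (u x t - g x t) $ j = nrm x $ j * (u x t - g x t) $ i" for i j
        using tang[OF x tT] unfolding cross_eq_def by (simp add: algebra_simps)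
      show "nrm x \<bullet> (u x t - g x t) = 0" using wt unfolding w_def n_def U_def Gv_def by simp
    qed
    then show ?thesis by simp
  qed
  have part2: "\<forall>x\<in>frontier \<Omega>. \<forall>t\<in>{0..T}. u x t = g x t"
  proof (intro ballI)
    fix x t assume x: "x \<in> frontier \<Omega>" and tT: "t \<in> {0..T}"
    have clE: "closure (frontier \<Omega> - E) \<subseteq> frontier \<Omega>"
      by (rule closure_minimal) (auto simp: frontier_closed)
    have "x \<in> closure (frontier \<Omega> - E)" using bdry x unfolding pw_smooth_boundary_def by auto
    moreover have "continuous_on (closure (frontier \<Omega> - E)) (\<lambda>y. U (y, t) - Gv (y, t))"
    proof -
      have sub: "(\<lambda>y. (y, t)) ` closure (frontier \<Omega> - E) \<subseteq> S" using clE fr_cl inS tT by auto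
      have c1: "continuous_on (closure (frontier \<Omega> - E)) (\<lambda>y. (y, t))" by (intro continuous_intros)
      show ?thesis
        by (intro continuous_on_diff continuous_on_compose2[OF smooth_cont[OF sU] c1 sub]
            continuous_on_compose2[OF smooth_cont[OF sG] c1 sub])
    qed
    ultimately have "U (x, t) - Gv (x, t) = 0"
      using continuous_constant_on_closure[of "frontier \<Omega> - E" "\<lambda>y. U (y, t) - Gv (y, t)" 0 x]
        part2a tT unfolding U_def Gv_def by auto
    then show "u x t = g x t" unfolding U_def Gv_def by simp
  qed
  show ?thesis using part1 part2 part3 by blast
qed


end
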